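(* Let $\mathcal{A}$ be a complete rpoNFA. Then $L(\mathcal{A})$ is $\mathrm{depth}(\mathcal{A})$-$\mathcal{R}$-trivial.
   Context: An NFA $\mathcal{A}=(Q,\Sigma,\cdot,I,F)$ with $\cdot:Q\times\Sigma\to 2^Q$ is complete if $q\cdot a\neq\emptyset$ for all $q\in Q$, $a\in\Sigma$. A poNFA is an NFA whose reachability relation ($p\le q$ iff $q\in p\cdot w$ for some word $w$) is a partial order; an rpoNFA is a poNFA such that for every state $q$ and letter $a$, $q\in q\cdot a$ implies $q\cdot a=\{q\}$. A path is simple if all its states are pairwise distinct; $\mathrm{depth}(\mathcal{A})$ is the number of input symbols on a longest simple path of $\mathcal{A}$ starting in an initial state. $\mathrm{sub}_k(v)$ is the set of subsequences (scattered subwords) of $v$ of length at most $k$; $u\sim_k v$ iff $\mathrm{sub}_k(u)=\mathrm{sub}_k(v)$; $x\sim^{\mathcal{R}}_k y$ iff every prefix of $x$ is $\sim_k$-equivalent to some prefix of $y$ and every prefix of $y$ is $\sim_k$-equivalent to some prefix of $x$. A language is $k$-$\mathcal{R}$-trivial if it is a union of $\sim^{\mathcal{R}}_k$-classes. *)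

theory Defs
  imports Main "HOL-Library.Sublist"
begin

definition nfa :: "'q set \<Rightarrow> 'a set \<Rightarrow> ('q \<Rightarrow> 'a \<Rightarrow> 'q set) \<Rightarrow> 'q set \<Rightarrow> 'q set \<Rightarrow> bool" where
  "nfa Q Sig delta I F \<longleftrightarrow> finite Q \<and> finite Sig \<and> I \<subseteq> Q \<and> F \<subseteq> Q \<and>
     (\<forall>q\<in>Q. \<forall>a\<in>Sig. delta q a \<subseteq> Q)"

fun steps :: "('q \<Rightarrow> 'a \<Rightarrow> 'q set) \<Rightarrow> 'q set \<Rightarrow> 'a list \<Rightarrow> 'q set" where
  "steps delta S [] = S"
| "steps delta S (a # w) = steps delta (\<Union>q\<in>S. delta q a) w"

definition lang :: "'a set \<Rightarrow> ('q \<Rightarrow> 'a \<Rightarrow> 'q set) \<Rightarrow> 'q set \<Rightarrow> 'q set \<Rightarrow> 'a list set" where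
  "lang Sig delta I F = {w \<in> lists Sig. steps delta I w \<inter> F \<noteq> {}}"

definition complete_nfa :: "'q set \<Rightarrow> 'a set \<Rightarrow> ('q \<Rightarrow> 'a \<Rightarrow> 'q set) \<Rightarrow> bool" where
  "complete_nfa Q Sig delta \<longleftrightarrow> (\<forall>q\<in>Q. \<forall>a\<in>Sig. delta q a \<noteq> {})"

definition reach :: "'a set \<Rightarrow> ('q \<Rightarrow> 'a \<Rightarrow> 'q set) \<Rightarrow> 'q \<Rightarrow> 'q \<Rightarrow> bool" where
  "reach Sig delta p q \<longleftrightarrow> (\<exists>w\<in>lists Sig. q \<in> steps delta {p} w)"

text \<open>The reachability relation is always reflexive and transitive; it is a partial
  order iff it is antisymmetric (on Q).\<close>
definition poNFA :: "'q set \<Rightarrow> 'a set \<Rightarrow> ('q \<Rightarrow> 'a \<Rightarrow> 'q set) \<Rightarrow> 'q set \<Rightarrow> 'q set \<Rightarrow> bool" where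
  "poNFA Q Sig delta I F \<longleftrightarrow> nfa Q Sig delta I F \<and>
     (\<forall>p\<in>Q. \<forall>q\<in>Q. reach Sig delta p q \<and> reach Sig delta q p \<longrightarrow> p = q)"

definition rpoNFA :: "'q set \<Rightarrow> 'a set \<Rightarrow> ('q \<Rightarrow> 'a \<Rightarrow> 'q set) \<Rightarrow> 'q set \<Rightarrow> 'q set \<Rightarrow> bool" where
  "rpoNFA Q Sig delta I F \<longleftrightarrow> poNFA Q Sig delta I F \<and>
     (\<forall>q\<in>Q. \<forall>a\<in>Sig. q \<in> delta q a \<longrightarrow> delta q a = {q})"

definition simple_init_path :: "'q set \<Rightarrow> 'a set \<Rightarrow> ('q \<Rightarrow> 'a \<Rightarrow> 'q set) \<Rightarrow> 'q set \<Rightarrow>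
    'q list \<Rightarrow> 'a list \<Rightarrow> bool" where
  "simple_init_path Q Sig delta I qs ws \<longleftrightarrow>
     length qs = Suc (length ws) \<and> set qs \<subseteq> Q \<and> ws \<in> lists Sig \<and>
     hd qs \<in> I \<and> distinct qs \<and>
     (\<forall>i < length ws. qs ! Suc i \<in> delta (qs ! i) (ws ! i))"

definition depth :: "'q set \<Rightarrow> 'a set \<Rightarrow> ('q \<Rightarrow> 'a \<Rightarrow> 'q set) \<Rightarrow> 'q set \<Rightarrow> nat" where
  "depth Q Sig delta I =
     Max {length ws | qs ws. simple_init_path Q Sig delta I qs ws}"

definition sub_k :: "nat \<Rightarrow> 'a list \<Rightarrow> 'a list set" where
  "sub_k k v = {u. subseq u v \<and> length u \<le> k}"

definition sim_k :: "nat \<Rightarrow> 'a list \<Rightarrow> 'a list \<Rightarrow> bool" where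
  "sim_k k u v \<longleftrightarrow> sub_k k u = sub_k k v"

definition simR_k :: "nat \<Rightarrow> 'a list \<Rightarrow> 'a list \<Rightarrow> bool" where
  "simR_k k x y \<longleftrightarrow>
     (\<forall>x'. prefix x' x \<longrightarrow> (\<exists>y'. prefix y' y \<and> sim_k k x' y')) \<and>
     (\<forall>y'. prefix y' y \<longrightarrow> (\<exists>x'. prefix x' x \<and> sim_k k y' x'))"

definition k_R_trivial :: "nat \<Rightarrow> 'a set \<Rightarrow> 'a list set \<Rightarrow> bool" where
  "k_R_trivial k Sig L \<longleftrightarrow>
     (\<exists>W \<subseteq> lists Sig. L = (\<Union>w\<in>W. {v \<in> lists Sig. simR_k k v w}))"

end

theory Submission
  imports Defs
begin

lemma steps_append: "steps delta S (u @ w) = steps delta (steps delta S u) w"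
  by (induction u arbitrary: S) auto

lemma steps_union: "steps delta S w = (\<Union>q\<in>S. steps delta {q} w)"
proof (induction w arbitrary: S)
  case Nil then show ?case by auto
next
  case (Cons a w)
  have "steps delta S (a # w) = steps delta (\<Union>q\<in>S. delta q a) w" by simp
  also have "\<dots> = (\<Union>p\<in>(\<Union>q\<in>S. delta q a). steps delta {p} w)"
    by (rule Cons.IH)
  also have "\<dots> = (\<Union>q\<in>S. \<Union>p\<in>delta q a. steps delta {p} w)" by blast
  also have "\<dots> = (\<Union>q\<in>S. steps delta {q} (a # w))"
  proof (rule SUP_cong[OF refl])
    fix q show "(\<Union>p\<in>delta q a. steps delta {p} w) = steps delta {q} (a # w)"
      using Cons.IH[of "delta q a"] by simp
  qed
  finally show ?case .
qed

lemma steps_loop: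
  assumes "\<forall>q\<in>Q. \<forall>a\<in>Sig. q \<in> delta q a \<longrightarrow> delta q a = {q}" "q \<in> Q"
    "set u \<subseteq> {b \<in> Sig. q \<in> delta q b}"
  shows "steps delta {q} u = {q}"
  using assms(3)
proof (induction u)
  case Nil then show ?case by simp
next
  case (Cons a u)
  then have "delta q a = {q}" using assms(1,2) by auto
  then show ?case using Cons by simp
qed

lemma split_first:
  assumes "\<not> set u \<subseteq> S"
  shows "\<exists>w0 a u'. u = w0 @ a # u' \<and> set w0 \<subseteq> S \<and> a \<notin> S"
  using assms
proof (induction u)
  case Nil then show ?case by simp
next
  case (Cons b u)
  show ?case
  proof (cases "b \<in> S")
    case True
    then have "\<not> set u \<subseteq> S" using Cons.prems by auto
    then obtain w0 a u' where "u = w0 @ a # u'" "set w0 \<subseteq> S" "a \<notin> S" using Cons.IH by blast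
    then show ?thesis using True by (intro exI[of _ "b # w0"]) auto
  next
    case False
    then show ?thesis by (intro exI[of _ "[]"]) auto
  qed
qed

lemma subseq_drop_a:
  assumes "a \<notin> set v0" "subseq (a # s) (v0 @ a # y)"
  shows "subseq s y"
  using assms
proof (induction v0)
  case Nil then show ?case by simp
next
  case (Cons b v0)
  then have "b \<noteq> a" by auto
  then have "subseq (a # s) (v0 @ a # y)" using Cons.prems
    using subseq_Cons2_neq by (metis append_Cons)
  then show ?case using Cons by auto
qed

lemma sim_drop:
  assumes "sim_k (Suc k) (w0 @ a # x) (v0 @ a # y)" "a \<notin> set w0" "a \<notin> set v0"
  shows "sim_k k x y"
proof -
  have dir: "subseq s y'" if "sim_k (Suc k) (w0' @ a # x') (v0' @ a # y')" "a \<notin> set v0'"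
    "subseq s x'" "length s \<le> k" for s w0' x' v0' y'
  proof -
    have "subseq (a # s) (w0' @ a # x')" using that(3)
      by (simp add: subseq_drop_many)
    then have "a # s \<in> sub_k (Suc k) (w0' @ a # x')" using that(4) by (simp add: sub_k_def)
    then have "a # s \<in> sub_k (Suc k) (v0' @ a # y')" using that(1) by (simp add: sim_k_def)
    then show ?thesis using subseq_drop_a[OF that(2)] by (simp add: sub_k_def)
  qed
  have s2: "sim_k (Suc k) (v0 @ a # y) (w0 @ a # x)" using assms(1) by (simp add: sim_k_def)
  show ?thesis unfolding sim_k_def sub_k_def
    using dir[OF assms(1) assms(3)] dir[OF s2 assms(2)] by blast
qed

lemma letter_sub: "b \<in> set z \<Longrightarrow> sim_k (Suc k) z z' \<Longrightarrow> b \<in> set z'"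
proof -
  assume "b \<in> set z" "sim_k (Suc k) z z'"
  then have "[b] \<in> sub_k (Suc k) z" by (simp add: sub_k_def subseq_singleton_left)
  then have "[b] \<in> sub_k (Suc k) z'" using \<open>sim_k (Suc k) z z'\<close> by (simp add: sim_k_def)
  then show ?thesis by (simp add: sub_k_def subseq_singleton_left)
qed

lemma prefix_split:
  assumes "prefix z (w0 @ a # u')" "\<not> set z \<subseteq> S" "set w0 \<subseteq> S"
  shows "\<exists>x. z = w0 @ a # x \<and> prefix x u'"
  using assms
proof (induction w0 arbitrary: z)
  case Nil
  then obtain c x where "z = c # x" by (cases z) auto
  then show ?case using Nil by (auto simp: prefix_Cons)
next
  case (Cons b w0)
  then obtain c z1 where z: "z = c # z1" by (cases z) auto
  then have "c = b" "prefix z1 (w0 @ a # u')" using Cons.prems by auto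
  moreover have "\<not> set z1 \<subseteq> S" using Cons.prems z \<open>c = b\<close> by auto
  ultimately show ?case using Cons z by fastforce
qed

lemma comb_dir:
  assumes "simR_k (Suc k) u v" "u = w0 @ a # u'" "set w0 \<subseteq> S" "a \<notin> S"
    "v = v0 @ a # v'" "set v0 \<subseteq> S"
  shows "\<forall>x'. prefix x' u' \<longrightarrow> (\<exists>y'. prefix y' v' \<and> sim_k k x' y')"
proof (intro allI impI)
  fix x' assume "prefix x' u'"
  then have "prefix (w0 @ a # x') u" using assms(2) by simp
  then obtain z where z: "prefix z v" "sim_k (Suc k) (w0 @ a # x') z"
    using assms(1) unfolding simR_k_def by blast
  have "a \<in> set z" using letter_sub[OF _ z(2)] by simp
  then have "\<not> set z \<subseteq> S" using assms(4) by blast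
  then obtain y where y: "z = v0 @ a # y" "prefix y v'"
    using prefix_split[of z v0 a v' S] z(1) assms(5,6) by blast
  have "sim_k k x' y"
    using sim_drop[of k w0 a x' v0 y] z(2) y(1) assms(3,4,6) by blast
  then show "\<exists>y'. prefix y' v' \<and> sim_k k x' y'" using y(2) by blast
qed

lemma simR_sym: "simR_k k u v \<Longrightarrow> simR_k k v u"
  unfolding simR_k_def by blast

lemma comb:
  assumes "simR_k (Suc k) u v" "u = w0 @ a # u'" "set w0 \<subseteq> S" "a \<notin> S"
  shows "\<exists>v0 v'. v = v0 @ a # v' \<and> set v0 \<subseteq> S \<and> simR_k k u' v'"
proof -
  have pu: "prefix (w0 @ [a]) u" using assms(2) by simp
  obtain z where z: "prefix z v" "sim_k (Suc k) (w0 @ [a]) z"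
    using assms(1) pu unfolding simR_k_def by blast
  have "a \<in> set z" by (rule letter_sub[OF _ z(2)]) simp
  then have "a \<in> set v" using z(1) by (meson set_mono_prefix subsetD)
  then have "\<not> set v \<subseteq> S" using assms(4) by blast
  then obtain v0 b v'' where v: "v = v0 @ b # v''" "set v0 \<subseteq> S" "b \<notin> S"
    using split_first[of v S] by auto
  have pv: "prefix (v0 @ [b]) v" using v(1) by simp
  obtain z' where z': "prefix z' u" "sim_k (Suc k) (v0 @ [b]) z'"
    using assms(1) pv unfolding simR_k_def by blast
  have "b \<in> set z'" by (rule letter_sub[OF _ z'(2)]) simp
  then have "\<not> set z' \<subseteq> S" using v(3) by blast
  then obtain x where zx: "z' = w0 @ a # x"
    using prefix_split[of z' w0 a u' S] z'(1) assms(2,3) by blast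
  have z's: "sim_k (Suc k) z' (v0 @ [b])" using z'(2) by (simp add: sim_k_def)
  have "a \<in> set (v0 @ [b])" by (rule letter_sub[OF _ z's]) (simp add: zx)
  then have "a \<in> set v0 \<or> a = b" by auto
  then have ab: "a = b" using v(2) assms(4) by blast
  have va: "v = v0 @ a # v''" using v(1) ab by simp
  have d1: "\<forall>x'. prefix x' u' \<longrightarrow> (\<exists>y'. prefix y' v'' \<and> sim_k k x' y')"
    by (rule comb_dir[OF assms(1-4) va v(2)])
  have d2: "\<forall>x'. prefix x' v'' \<longrightarrow> (\<exists>y'. prefix y' u' \<and> sim_k k x' y')"
    by (rule comb_dir[OF simR_sym[OF assms(1)] va v(2) assms(4) assms(2) assms(3)])
  have "simR_k k u' v''" unfolding simR_k_def using d1 d2 by blast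
  then show ?thesis using v ab by blast
qed

lemma reach_path:
  assumes "simple_init_path Q Sig delta {p} qs ws" "i < length qs"
  shows "reach Sig delta p (qs ! i)"
  using assms(2)
proof (induction i)
  case 0
  have "qs ! 0 = p" using assms(1) unfolding simple_init_path_def by (cases qs) auto
  then show ?case unfolding reach_def by (intro bexI[of _ "[]"]) auto
next
  case (Suc i)
  then obtain w where w: "w \<in> lists Sig" "qs ! i \<in> steps delta {p} w"
    unfolding reach_def by auto
  have i: "i < length ws" using Suc.prems assms(1) unfolding simple_init_path_def by auto
  then have "qs ! Suc i \<in> delta (qs ! i) (ws ! i)" "ws ! i \<in> Sig"
    using assms(1) unfolding simple_init_path_def by auto
  then have "qs ! Suc i \<in> steps delta {p} (w @ [ws ! i])" "w @ [ws ! i] \<in> lists Sig"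
    using w by (auto simp: steps_append)
  then show ?case unfolding reach_def by blast
qed

definition H where
  "H Q Sig delta q k \<longleftrightarrow> (\<forall>qs ws. simple_init_path Q Sig delta {q} qs ws \<longrightarrow> length ws \<le> k)"

lemma H_step:
  assumes po: "poNFA Q Sig delta I F" and "H Q Sig delta q k" "q \<in> Q" "a \<in> Sig"
    "p \<in> delta q a" "p \<noteq> q"
  shows "k \<ge> 1 \<and> H Q Sig delta p (k - 1)"
proof -
  have pQ: "p \<in> Q" using po assms(3,4,5) unfolding poNFA_def nfa_def by blast
  have ext: "length ws + 1 \<le> k" if sp: "simple_init_path Q Sig delta {p} qs ws" for qs ws
  proof -
    have "q \<notin> set qs"
    proof
      assume "q \<in> set qs"
      then obtain i where i: "i < length qs" "qs ! i = q" by (auto simp: in_set_conv_nth)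
      have "reach Sig delta p q" using reach_path[OF sp i(1)] i(2) by simp
      moreover have "reach Sig delta q p" unfolding reach_def
        using assms(4,5) by (intro bexI[of _ "[a]"]) auto
      ultimately show False using po pQ assms(3,6) unfolding poNFA_def by blast
    qed
    have tr: "\<forall>i<length (a # ws). (q # qs) ! Suc i \<in> delta ((q # qs) ! i) ((a # ws) ! i)"
    proof (intro allI impI)
      fix i assume i: "i < length (a # ws)"
      show "(q # qs) ! Suc i \<in> delta ((q # qs) ! i) ((a # ws) ! i)"
      proof (cases i)
        case 0
        have "qs ! 0 = p" using sp unfolding simple_init_path_def by (cases qs) auto
        then show ?thesis using 0 assms(5) by simp
      next
        case (Suc j)
        then show ?thesis using sp i unfolding simple_init_path_def by auto
      qed
    qed
    have "simple_init_path Q Sig delta {q} (q # qs) (a # ws)"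
      using sp \<open>q \<notin> set qs\<close> assms(3,4) tr unfolding simple_init_path_def by auto
    then show ?thesis using assms(2) unfolding H_def by fastforce
  qed
  have "simple_init_path Q Sig delta {p} [p] []"
    using pQ unfolding simple_init_path_def by auto
  then have "1 \<le> k" using ext by fastforce
  moreover have "H Q Sig delta p (k - 1)" unfolding H_def using ext by fastforce
  ultimately show ?thesis by blast
qed


lemma key:
  assumes rpo: "rpoNFA Q Sig delta I F" and cpl: "complete_nfa Q Sig delta"
  shows "\<forall>q u v. q \<in> Q \<longrightarrow> H Q Sig delta q k \<longrightarrow> u \<in> lists Sig \<longrightarrow> v \<in> lists Sig \<longrightarrow>
     simR_k k u v \<longrightarrow> steps delta {q} u \<inter> F \<noteq> {} \<longrightarrow> steps delta {q} v \<inter> F \<noteq> {}"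
proof (induction k)
  have po: "poNFA Q Sig delta I F" using rpo unfolding rpoNFA_def by blast
  have loop: "\<forall>q\<in>Q. \<forall>a\<in>Sig. q \<in> delta q a \<longrightarrow> delta q a = {q}"
    using rpo unfolding rpoNFA_def by blast
  {
    case 0
    show ?case
    proof (intro allI impI)
      fix q u v assume q: "q \<in> Q" and h: "H Q Sig delta q 0" and u: "u \<in> lists Sig"
        and v: "v \<in> lists Sig" and acc: "steps delta {q} u \<inter> F \<noteq> {}"
      have all: "q \<in> delta q b" if b: "b \<in> Sig" for b
      proof -
        obtain p where p: "p \<in> delta q b" using cpl q b unfolding complete_nfa_def by blast
        show ?thesis
        proof (cases "p = q")
          case True then show ?thesis using p by simp
        next
          case False then show ?thesis using H_step[OF po h q b p] by simp
        qed
      qed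
      have "steps delta {q} u = {q}" using steps_loop[OF loop q] u all by auto
      moreover have "steps delta {q} v = {q}" using steps_loop[OF loop q] v all by auto
      ultimately show "steps delta {q} v \<inter> F \<noteq> {}" using acc by simp
    qed
  next
    case (Suc k)
    show ?case
    proof (intro allI impI)
      fix q u v assume q: "q \<in> Q" and h: "H Q Sig delta q (Suc k)" and u: "u \<in> lists Sig"
        and v: "v \<in> lists Sig" and sr: "simR_k (Suc k) u v" and acc: "steps delta {q} u \<inter> F \<noteq> {}"
      define S where "S = {b \<in> Sig. q \<in> delta q b}"
      show "steps delta {q} v \<inter> F \<noteq> {}"
      proof (cases "set u \<subseteq> S")
        case True
        obtain u' where "prefix u' u" "sim_k (Suc k) v u'" using sr unfolding simR_k_def by blast
        then have "set v \<subseteq> set u"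
        proof -
          assume pu: "prefix u' u" and sv: "sim_k (Suc k) v u'"
          have "set v \<subseteq> set u'"
          proof
            fix b assume "b \<in> set v" then show "b \<in> set u'" by (rule letter_sub[OF _ sv])
          qed
          moreover have "set u' \<subseteq> set u" using pu by (rule set_mono_prefix)
          ultimately show ?thesis by (rule order_trans)
        qed
        then have "set v \<subseteq> S" using True by blast
        then have "steps delta {q} v = {q}" using steps_loop[OF loop q] S_def by auto
        moreover have "steps delta {q} u = {q}" using steps_loop[OF loop q] True S_def by auto
        ultimately show ?thesis using acc by simp
      next
        case False
        then obtain w0 a u' where d: "u = w0 @ a # u'" "set w0 \<subseteq> S" "a \<notin> S"
          using split_first[of u S] by auto
        have aS: "a \<in> Sig" "u' \<in> lists Sig" using u d(1) by auto
        have w0s: "steps delta {q} w0 = {q}" using steps_loop[OF loop q] d(2) S_def by auto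
        have "steps delta {q} u = steps delta (delta q a) u'"
          using d(1) w0s by (simp add: steps_append)
        then obtain p where p: "p \<in> delta q a" "steps delta {p} u' \<inter> F \<noteq> {}"
          using acc steps_union[of delta "delta q a" u'] by auto
        have pq: "p \<noteq> q" using p(1) d(3) aS S_def by auto
        have pQ: "p \<in> Q" using po q aS p(1) unfolding poNFA_def nfa_def by blast
        have hp: "H Q Sig delta p k" using H_step[OF po h q aS(1) p(1) pq] by simp
        obtain v0 v' where dv: "v = v0 @ a # v'" "set v0 \<subseteq> S" "simR_k k u' v'"
          using comb[OF sr d] by blast
        have v': "v' \<in> lists Sig" using v dv(1) by auto
        have "steps delta {p} v' \<inter> F \<noteq> {}"
          using Suc.IH pQ hp aS(2) v' dv(3) p(2) by blast
        moreover have v0s: "steps delta {q} v0 = {q}" using steps_loop[OF loop q] dv(2) S_def by auto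
        have "steps delta {q} v = (\<Union>p'\<in>delta q a. steps delta {p'} v')"
          using dv(1) v0s steps_union[of delta "delta q a" v'] by (simp add: steps_append)
        ultimately show ?thesis using p(1) by blast
      qed
    qed
  }
qed

theorem theorem4:
  fixes Q :: "'q set" and Sig :: "'a set" and delta :: "'q \<Rightarrow> 'a \<Rightarrow> 'q set"
    and I F :: "'q set"
  assumes "rpoNFA Q Sig delta I F"
    and "complete_nfa Q Sig delta"
  shows "k_R_trivial (depth Q Sig delta I) Sig (lang Sig delta I F)"
proof -
  let ?k = "depth Q Sig delta I"
  have nfa: "nfa Q Sig delta I F" using assms(1) unfolding rpoNFA_def poNFA_def by blast
  have fin: "finite {length ws | qs ws. simple_init_path Q Sig delta I qs ws}"
  proof (rule finite_subset)
    show "{length ws | qs ws. simple_init_path Q Sig delta I qs ws} \<subseteq> {..card Q}"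
    proof
      fix n assume "n \<in> {length ws | qs ws. simple_init_path Q Sig delta I qs ws}"
      then obtain qs ws where n: "n = length ws" and sp: "simple_init_path Q Sig delta I qs ws"
        by blast
      have "length qs = card (set qs)" using sp unfolding simple_init_path_def
        by (simp add: distinct_card)
      also have "\<dots> \<le> card Q" using sp nfa unfolding simple_init_path_def nfa_def
        by (simp add: card_mono)
      finally show "n \<in> {..card Q}" using sp n unfolding simple_init_path_def by simp
    qed
  qed simp
  have hI: "H Q Sig delta q ?k" if q: "q \<in> I" for q
    unfolding H_def
  proof (intro allI impI)
    fix qs ws assume "simple_init_path Q Sig delta {q} qs ws"
    then have "simple_init_path Q Sig delta I qs ws" using q unfolding simple_init_path_def by auto
    then show "length ws \<le> ?k" unfolding depth_def using fin by (intro Max_ge) auto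
  qed
  have refl: "simR_k k w w" for k and w :: "'a list" unfolding simR_k_def sim_k_def by blast
  show ?thesis unfolding k_R_trivial_def
  proof (intro exI[of _ "lang Sig delta I F"] conjI)
    show "lang Sig delta I F \<subseteq> lists Sig" unfolding lang_def by blast
    show "lang Sig delta I F = (\<Union>w\<in>lang Sig delta I F. {v \<in> lists Sig. simR_k ?k v w})"
    proof
      show "lang Sig delta I F \<subseteq> (\<Union>w\<in>lang Sig delta I F. {v \<in> lists Sig. simR_k ?k v w})"
        using refl unfolding lang_def by blast
      show "(\<Union>w\<in>lang Sig delta I F. {v \<in> lists Sig. simR_k ?k v w}) \<subseteq> lang Sig delta I F"
      proof
        fix v assume "v \<in> (\<Union>w\<in>lang Sig delta I F. {v \<in> lists Sig. simR_k ?k v w})"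
        then obtain w where w: "w \<in> lang Sig delta I F" "v \<in> lists Sig" "simR_k ?k v w" by blast
        then obtain q where q: "q \<in> I" "steps delta {q} w \<inter> F \<noteq> {}"
          unfolding lang_def using steps_union[of delta I w] by auto
        have qQ: "q \<in> Q" using q(1) nfa unfolding nfa_def by blast
        have "steps delta {q} v \<inter> F \<noteq> {}"
          using key[OF assms, of ?k] qQ hI[OF q(1)] w simR_sym[OF w(3)] q(2)
          unfolding lang_def by blast
        then show "v \<in> lang Sig delta I F" using w(2) q(1) steps_union[of delta I v]
          unfolding lang_def by auto
      qed
    qed
  qed
qed

end
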